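(* Assume (A2) and a congestion game payoff structure in which each resource reward $w_r$ is continuously differentiable. Then the steady-state game is a full potential game: there exists a continuously differentiable $U:\mathbb R^n_{\ge0}\to\mathbb R$ with $\mathcal F=\nabla U$ on $X_{\mathcal U_D}$. Moreover, if every $w_r$ is nonincreasing, the set of Nash equilibria of $\mathcal F$ is compact and convex; and if every $w_r$ is strictly decreasing, the equilibrium resource flows $\sigma_r(x)$, $r\in\mathcal R$, take the same value at every Nash equilibrium $x$ of $\mathcal F$.
   Context: Model: classes $c\in[C]$ with masses $m^c>0$, finite state sets $\mathcal S^c$, nonempty finite admissible action sets $\mathcal A^c(s)$ ($\mathcal A^c=\bigcup_s\mathcal A^c(s)$), transition kernels $\phi^c(\cdot\mid s,a)$. $\mathcal U^c_D$ = deterministic policies (maps assigning to each $s$ an action $u(s)\in\mathcal A^c(s)$), $n^c=|\mathcal U^c_D|$, $n=\sum_cn^c$. $\phi^{c,u}_{ss'}=\phi^c(s\mid s',u(s'))$. (A2): for all $c,u\in\mathcal U^c_D$, $\phi^{c,u}$ has exactly one recurrent communicating class; $\eta^{c,u}$ is the unique stationary distribution of the continuous-time chain with generator $\lambda(\phi^{c,u}-I)$. Congestion game payoff structure: all classes have the same action rate $\lambda>0$; there is a finite set of resources $\mathcal R$ and each action $a\in\mathcal A^c$ is a subset $a\subseteq\mathcal R$; each resource has a reward function $w_r:\mathbb R_{\ge0}\to\mathbb R$; for a state-action distribution $\nu=(\nu^c)_c$, $\nu^c\in\mathbb R_{\ge0}^{\mathcal S^c\times\mathcal A^c}$ with total mass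 $m^c$, the flow on $r$ is $\sigma_r=\lambda\sum_c\sum_{s\in\mathcal S^c}\sum_{a\in\mathcal A^c: r\in a}\nu^c[s,a]$ and the single-stage reward is $r^c(s,a,\nu)=\sum_{r\in a}w_r(\sigma_r)$. Steady-state game: $X_{\mathcal U_D}=\prod_c\{x^c\in\mathbb R_{\ge0}^{n^c}:\sum x^c=m^c\}$; for $x\in X_{\mathcal U_D}$, the induced steady-state flow is $\sigma_r(x)=\lambda\sum_c\sum_{s\in\mathcal S^c}\sum_{u\in\mathcal U^c_D: r\in u(s)}\eta^{c,u}(s)x^c[u]$ and $\mathcal F^c_u(x)=\sum_{s\in\mathcal S^c}\eta^{c,u}(s)\sum_{r\in u(s)}w_r(\sigma_r(x))$, $\mathcal F=(\mathcal F^c_u)_{c,u}\in\mathbb R^n$. $x$ is a Nash equilibrium of $\mathcal F$ if for all $c,u$: $x^c[u]>0\Rightarrow\mathcal F^c_u(x)\ge\mathcal F^c_v(x)$ for all $v\in\mathcal U^c_D$. *)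

theory Defs
  imports "HOL-Analysis.Analysis" "HOL-Library.FuncSet"
begin

text \<open>Classes are the elements of a finite type 'c (so [C] = UNIV),
resources the elements of a finite type 'r (so the resource set is UNIV),
states of class c form a subset S c of a finite type 's.
Actions are resource subsets; A c s is the admissible action set in state s.
phi c s' s a is the probability phi^c(s' | s, a) of moving to s' from s under a.\<close>

definition policies :: "('c \<Rightarrow> 's set) \<Rightarrow> ('c \<Rightarrow> 's \<Rightarrow> 'r set set) \<Rightarrow> 'c \<Rightarrow> ('s \<Rightarrow> 'r set) set" where
  "policies S A c = PiE (S c) (A c)"

definition idx :: "('c \<Rightarrow> 's set) \<Rightarrow> ('c \<Rightarrow> 's \<Rightarrow> 'r set set) \<Rightarrow> ('c \<times> ('s \<Rightarrow> 'r set)) set" where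
  "idx S A = {(c, u). u \<in> policies S A c}"

definition tstep :: "('c \<Rightarrow> 's set) \<Rightarrow> ('c \<Rightarrow> 's \<Rightarrow> 's \<Rightarrow> 'r set \<Rightarrow> real) \<Rightarrow> 'c \<Rightarrow> ('s \<Rightarrow> 'r set) \<Rightarrow> 's \<Rightarrow> 's \<Rightarrow> bool" where
  "tstep S phi c u s t \<longleftrightarrow> s \<in> S c \<and> t \<in> S c \<and> phi c t s (u s) > 0"

definition reach :: "('c \<Rightarrow> 's set) \<Rightarrow> ('c \<Rightarrow> 's \<Rightarrow> 's \<Rightarrow> 'r set \<Rightarrow> real) \<Rightarrow> 'c \<Rightarrow> ('s \<Rightarrow> 'r set) \<Rightarrow> 's \<Rightarrow> 's \<Rightarrow> bool" where
  "reach S phi c u = (tstep S phi c u)\<^sup>*\<^sup>*"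

definition comm_class :: "('c \<Rightarrow> 's set) \<Rightarrow> ('c \<Rightarrow> 's \<Rightarrow> 's \<Rightarrow> 'r set \<Rightarrow> real) \<Rightarrow> 'c \<Rightarrow> ('s \<Rightarrow> 'r set) \<Rightarrow> 's set \<Rightarrow> bool" where
  "comm_class S phi c u K \<longleftrightarrow>
     (\<exists>s \<in> S c. K = {t \<in> S c. reach S phi c u s t \<and> reach S phi c u t s})"

text \<open>A communicating class of a finite chain is recurrent iff it is closed.\<close>
definition recurrent_class :: "('c \<Rightarrow> 's set) \<Rightarrow> ('c \<Rightarrow> 's \<Rightarrow> 's \<Rightarrow> 'r set \<Rightarrow> real) \<Rightarrow> 'c \<Rightarrow> ('s \<Rightarrow> 'r set) \<Rightarrow> 's set \<Rightarrow> bool" where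
  "recurrent_class S phi c u K \<longleftrightarrow>
     comm_class S phi c u K \<and> (\<forall>s \<in> K. \<forall>t. tstep S phi c u s t \<longrightarrow> t \<in> K)"

definition A2 :: "('c \<Rightarrow> 's set) \<Rightarrow> ('c \<Rightarrow> 's \<Rightarrow> 'r set set) \<Rightarrow> ('c \<Rightarrow> 's \<Rightarrow> 's \<Rightarrow> 'r set \<Rightarrow> real) \<Rightarrow> bool" where
  "A2 S A phi \<longleftrightarrow> (\<forall>c. \<forall>u \<in> policies S A c. \<exists>!K. recurrent_class S phi c u K)"

text \<open>Stationary distributions of the continuous-time chain with generator
 lam (phi^{c,u} - I), where phi^{c,u}_{s s'} = phi^c(s | s', u(s')).
 Distributions are functions on 's vanishing outside S c.\<close>
definition stationary :: "('c \<Rightarrow> 's set) \<Rightarrow> ('c \<Rightarrow> 's \<Rightarrow> 's \<Rightarrow> 'r set \<Rightarrow> real) \<Rightarrow> real \<Rightarrow> 'c \<Rightarrow> ('s \<Rightarrow> 'r set) \<Rightarrow> ('s \<Rightarrow> real) \<Rightarrow> bool" where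
  "stationary S phi lam c u \<eta> \<longleftrightarrow>
     (\<forall>s. s \<notin> S c \<longrightarrow> \<eta> s = 0) \<and> (\<forall>s \<in> S c. \<eta> s \<ge> 0) \<and> (\<Sum>s \<in> S c. \<eta> s) = 1 \<and>
     (\<forall>s \<in> S c. lam * ((\<Sum>s' \<in> S c. phi c s s' (u s') * \<eta> s') - \<eta> s) = 0)"

text \<open>eta^{c,u}: the unique stationary distribution (unique under (A2)).\<close>
definition eta :: "('c \<Rightarrow> 's set) \<Rightarrow> ('c \<Rightarrow> 's \<Rightarrow> 's \<Rightarrow> 'r set \<Rightarrow> real) \<Rightarrow> real \<Rightarrow> 'c \<Rightarrow> ('s \<Rightarrow> 'r set) \<Rightarrow> 's \<Rightarrow> real" where
  "eta S phi lam c u = (THE \<eta>. stationary S phi lam c u \<eta>)"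

text \<open>Steady-state strategy set X_{U_D}, embedded in the vector type
 (coordinates outside idx are 0).\<close>
definition XUD :: "('c::finite \<Rightarrow> 's::finite set) \<Rightarrow> ('c \<Rightarrow> 's \<Rightarrow> 'r::finite set set) \<Rightarrow> ('c \<Rightarrow> real)
    \<Rightarrow> (real ^ ('c \<times> ('s \<Rightarrow> 'r set))) set" where
  "XUD S A m = {x. (\<forall>i. i \<notin> idx S A \<longrightarrow> x $ i = 0) \<and> (\<forall>i \<in> idx S A. x $ i \<ge> 0) \<and>
                   (\<forall>c. (\<Sum>u \<in> policies S A c. x $ (c, u)) = m c)}"

definition Rn_nonneg :: "('c::finite \<Rightarrow> 's::finite set) \<Rightarrow> ('c \<Rightarrow> 's \<Rightarrow> 'r::finite set set)
    \<Rightarrow> (real ^ ('c \<times> ('s \<Rightarrow> 'r set))) set" where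
  "Rn_nonneg S A = {x. (\<forall>i. i \<notin> idx S A \<longrightarrow> x $ i = 0) \<and> (\<forall>i \<in> idx S A. x $ i \<ge> 0)}"

definition flow :: "('c::finite \<Rightarrow> 's::finite set) \<Rightarrow> ('c \<Rightarrow> 's \<Rightarrow> 'r::finite set set)
    \<Rightarrow> ('c \<Rightarrow> 's \<Rightarrow> 's \<Rightarrow> 'r set \<Rightarrow> real) \<Rightarrow> real \<Rightarrow> 'r \<Rightarrow> real ^ ('c \<times> ('s \<Rightarrow> 'r set)) \<Rightarrow> real" where
  "flow S A phi lam r x =
     lam * (\<Sum>c\<in>UNIV. \<Sum>s \<in> S c. \<Sum>u \<in> {u \<in> policies S A c. r \<in> u s}. eta S phi lam c u s * x $ (c, u))"

definition payoff :: "('c::finite \<Rightarrow> 's::finite set) \<Rightarrow> ('c \<Rightarrow> 's \<Rightarrow> 'r::finite set set)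
    \<Rightarrow> ('c \<Rightarrow> 's \<Rightarrow> 's \<Rightarrow> 'r set \<Rightarrow> real) \<Rightarrow> real \<Rightarrow> ('r \<Rightarrow> real \<Rightarrow> real)
    \<Rightarrow> 'c \<Rightarrow> ('s \<Rightarrow> 'r set) \<Rightarrow> real ^ ('c \<times> ('s \<Rightarrow> 'r set)) \<Rightarrow> real" where
  "payoff S A phi lam w c u x =
     (\<Sum>s \<in> S c. eta S phi lam c u s * (\<Sum>r \<in> u s. w r (flow S A phi lam r x)))"

definition nash_set :: "('c::finite \<Rightarrow> 's::finite set) \<Rightarrow> ('c \<Rightarrow> 's \<Rightarrow> 'r::finite set set)
    \<Rightarrow> ('c \<Rightarrow> 's \<Rightarrow> 's \<Rightarrow> 'r set \<Rightarrow> real) \<Rightarrow> real \<Rightarrow> ('r \<Rightarrow> real \<Rightarrow> real) \<Rightarrow> ('c \<Rightarrow> real)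
    \<Rightarrow> (real ^ ('c \<times> ('s \<Rightarrow> 'r set))) set" where
  "nash_set S A phi lam w m = {x \<in> XUD S A m.
     \<forall>c. \<forall>u \<in> policies S A c. x $ (c, u) > 0 \<longrightarrow>
        (\<forall>v \<in> policies S A c. payoff S A phi lam w c u x \<ge> payoff S A phi lam w c v x)}"

definition C1_nonneg :: "(real \<Rightarrow> real) \<Rightarrow> bool" where
  "C1_nonneg f \<longleftrightarrow> (\<exists>f'. (\<forall>t \<ge> 0. (f has_real_derivative f' t) (at t within {0..})) \<and>
                          continuous_on {0..} f')"

end

theory Submission
  imports Defs
begin


lemma reach_closed:
  assumes cl: "\<And>s t. s \<in> F \<Longrightarrow> tstep S phi c u s t \<Longrightarrow> t \<in> F"
  shows "reach S phi c u s t \<Longrightarrow> s \<in> F \<Longrightarrow> t \<in> F"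
  unfolding reach_def
  by (induction rule: rtranclp_induct) (auto intro: cl)

lemma reach_trans: "reach S phi c u s t \<Longrightarrow> reach S phi c u t v \<Longrightarrow> reach S phi c u s v"
  unfolding reach_def by auto

lemma reach_S: "reach S phi c u s t \<Longrightarrow> s \<in> S c \<Longrightarrow> t \<in> S c"
  unfolding reach_def
  by (induction rule: rtranclp_induct) (auto simp: tstep_def)

lemma closed_has_recurrent:
  fixes F :: "'s::finite set"
  assumes FS: "F \<subseteq> S c" and Fne: "F \<noteq> {}"
    and cl: "\<And>s t. s \<in> F \<Longrightarrow> tstep S phi c u s t \<Longrightarrow> t \<in> F"
  shows "\<exists>K. recurrent_class S phi c u K \<and> K \<subseteq> F \<and> K \<noteq> {}"
proof -
  define R where "R s = {t. reach S phi c u s t}" for s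
  from Fne obtain s1 where "s1 \<in> F" by auto
  then obtain s0 where s0: "s0 \<in> F" and min: "\<And>s. s \<in> F \<Longrightarrow> card (R s0) \<le> card (R s)"
    using ex_has_least_nat[of "\<lambda>s. s \<in> F" s1 "\<lambda>s. card (R s)"] by blast
  define K where "K = {t \<in> S c. reach S phi c u s0 t \<and> reach S phi c u t s0}"
  have s0S: "s0 \<in> S c" using s0 FS by auto
  have cc: "comm_class S phi c u K" unfolding comm_class_def K_def using s0S by blast
  have RF: "t \<in> F" if "reach S phi c u s0 t" for t
    by (rule reach_closed[where F=F and S=S and phi=phi and c=c and u=u]) (use cl that s0 in auto)
  have KF: "K \<subseteq> F" unfolding K_def using RF by blast
  have s0K: "s0 \<in> K" unfolding K_def reach_def using s0S by auto
  have closed: "t' \<in> K" if t: "t \<in> K" and st: "tstep S phi c u t t'" for t t'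
  proof -
    have r1: "reach S phi c u s0 t'"
      using t st unfolding K_def reach_def by auto
    have t'F: "t' \<in> F" using RF[OF r1] .
    have sub: "R t' \<subseteq> R s0" unfolding R_def using r1 reach_trans[of S phi c u s0 t'] by blast
    have "card (R s0) \<le> card (R t')" using min[OF t'F] .
    hence "R t' = R s0" using sub card_subset_eq[of "R s0" "R t'"] by (simp add: antisym card_mono)
    moreover have "s0 \<in> R s0" unfolding R_def reach_def by auto
    ultimately have "reach S phi c u t' s0" unfolding R_def by auto
    moreover have "t' \<in> S c" using st by (simp add: tstep_def)
    ultimately show ?thesis using r1 unfolding K_def by auto
  qed
  show ?thesis using cc KF s0K closed unfolding recurrent_class_def by blast
qed

lemma abs_fix:
  fixes P :: "'s \<Rightarrow> 's \<Rightarrow> real" and T :: "'s set"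
  assumes fin: "finite T"
    and nn: "\<And>s t. s \<in> T \<Longrightarrow> t \<in> T \<Longrightarrow> P t s \<ge> 0"
    and cs: "\<And>s. s \<in> T \<Longrightarrow> (\<Sum>t\<in>T. P t s) = 1"
    and fx: "\<And>t. t \<in> T \<Longrightarrow> (\<Sum>s\<in>T. P t s * d s) = d t"
  shows "t \<in> T \<Longrightarrow> (\<Sum>s\<in>T. P t s * \<bar>d s\<bar>) = \<bar>d t\<bar>"
proof -
  define g where "g t = (\<Sum>s\<in>T. P t s * \<bar>d s\<bar>)" for t
  have le: "\<bar>d t\<bar> \<le> g t" if "t \<in> T" for t
  proof -
    have "\<bar>d t\<bar> = \<bar>\<Sum>s\<in>T. P t s * d s\<bar>" using fx[OF that] by simp
    also have "\<dots> \<le> (\<Sum>s\<in>T. \<bar>P t s * d s\<bar>)" by (rule sum_abs)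
    also have "\<dots> = g t" unfolding g_def
      by (rule sum.cong) (use nn that in \<open>auto simp: abs_mult\<close>)
    finally show ?thesis .
  qed
  have "(\<Sum>t\<in>T. g t) = (\<Sum>s\<in>T. \<bar>d s\<bar> * (\<Sum>t\<in>T. P t s))"
    unfolding g_def sum_distrib_left
    by (subst sum.swap) (simp add: mult.commute)
  also have "\<dots> = (\<Sum>s\<in>T. \<bar>d s\<bar>)" using cs by simp
  finally have "(\<Sum>t\<in>T. g t - \<bar>d t\<bar>) = 0" by (simp add: sum_subtractf)
  hence "\<forall>t\<in>T. g t - \<bar>d t\<bar> = 0"
    using sum_nonneg_eq_0_iff[OF fin, of "\<lambda>t. g t - \<bar>d t\<bar>"] le by auto
  thus "t \<in> T \<Longrightarrow> (\<Sum>s\<in>T. P t s * \<bar>d s\<bar>) = \<bar>d t\<bar>" unfolding g_def by auto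
qed

lemma pos_closed:
  fixes P :: "'s \<Rightarrow> 's \<Rightarrow> real" and T :: "'s set"
  assumes fin: "finite T"
    and nn: "\<And>s t. s \<in> T \<Longrightarrow> t \<in> T \<Longrightarrow> P t s \<ge> 0"
    and fx: "\<And>t. t \<in> T \<Longrightarrow> (\<Sum>s\<in>T. P t s * f s) = f t"
    and fnn: "\<And>s. s \<in> T \<Longrightarrow> f s \<ge> 0"
    and st: "s \<in> T" "t \<in> T" "f s > 0" "P t s > 0"
  shows "f t > 0"
proof -
  have "0 < P t s * f s" using st by simp
  also have "\<dots> \<le> (\<Sum>s\<in>T. P t s * f s)"
    by (rule member_le_sum) (use st nn fnn fin in auto)
  finally show ?thesis using fx[OF st(2)] by simp
qed

lemma stationary_fix:
  assumes "lam > 0" "stationary S phi lam c u \<eta>" "t \<in> S c"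
  shows "(\<Sum>s\<in>S c. phi c t s (u s) * \<eta> s) = \<eta> t"
  using assms unfolding stationary_def by auto

lemma stationary_unique:
  fixes S :: "'c \<Rightarrow> 's::finite set"
  assumes nn: "\<And>s a s'. s \<in> S c \<Longrightarrow> a \<in> A c s \<Longrightarrow> s' \<in> S c \<Longrightarrow> phi c s' s a \<ge> 0"
    and ks: "\<And>s a. s \<in> S c \<Longrightarrow> a \<in> A c s \<Longrightarrow> (\<Sum>s' \<in> S c. phi c s' s a) = 1"
    and u: "u \<in> policies S A c"
    and uq: "\<exists>!K. recurrent_class S phi c u K"
    and lam: "lam > 0"
    and e1: "stationary S phi lam c u \<eta>1" and e2: "stationary S phi lam c u \<eta>2"
  shows "\<eta>1 = \<eta>2"
proof (rule ccontr)
  assume ne: "\<eta>1 \<noteq> \<eta>2"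
  define T where "T = S c"
  define P where "P t s = phi c t s (u s)" for t s
  define d where "d s = \<eta>1 s - \<eta>2 s" for s
  have fin: "finite T" by simp
  have uA: "s \<in> T \<Longrightarrow> u s \<in> A c s" for s using u unfolding policies_def T_def by auto
  have Pnn: "\<And>s t. s \<in> T \<Longrightarrow> t \<in> T \<Longrightarrow> P t s \<ge> 0"
    unfolding P_def using nn uA T_def by auto
  have Pcs: "\<And>s. s \<in> T \<Longrightarrow> (\<Sum>t\<in>T. P t s) = 1"
    unfolding P_def using ks uA T_def by auto
  have dfx: "\<And>t. t \<in> T \<Longrightarrow> (\<Sum>s\<in>T. P t s * d s) = d t"
    unfolding P_def d_def T_def
    using stationary_fix[OF lam e1] stationary_fix[OF lam e2]
    by (simp add: right_diff_distrib sum_subtractf)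
  have afx: "\<And>t. t \<in> T \<Longrightarrow> (\<Sum>s\<in>T. P t s * \<bar>d s\<bar>) = \<bar>d t\<bar>"
    using abs_fix[OF fin Pnn Pcs dfx] by blast
  define dp where "dp s = (\<bar>d s\<bar> + d s) / 2" for s
  define dm where "dm s = (\<bar>d s\<bar> - d s) / 2" for s
  have dpfx: "\<And>t. t \<in> T \<Longrightarrow> (\<Sum>s\<in>T. P t s * dp s) = dp t"
    unfolding dp_def using afx dfx
    by (simp add: distrib_left sum.distrib flip: sum_divide_distrib)
  have dmfx: "\<And>t. t \<in> T \<Longrightarrow> (\<Sum>s\<in>T. P t s * dm s) = dm t"
    unfolding dm_def using afx dfx
    by (simp add: right_diff_distrib sum_subtractf flip: sum_divide_distrib)
  have dpnn: "\<And>s. dp s \<ge> 0" unfolding dp_def by simp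
  have dmnn: "\<And>s. dm s \<ge> 0" unfolding dm_def by simp
  have out: "s \<notin> T \<Longrightarrow> d s = 0" for s using e1 e2 unfolding stationary_def d_def T_def by auto
  have sum0: "(\<Sum>s\<in>T. d s) = 0"
    using e1 e2 unfolding stationary_def d_def T_def by (simp add: sum_subtractf)
  obtain s0 where s0: "s0 \<in> T" "d s0 \<noteq> 0"
  proof -
    have "\<exists>s. d s \<noteq> 0" using ne unfolding d_def by (auto simp: fun_eq_iff)
    then obtain s where "d s \<noteq> 0" by auto
    thus ?thesis using out that by blast
  qed
  have exp: "\<exists>s\<in>T. d s > 0"
  proof (rule ccontr)
    assume "\<not> ?thesis"
    hence "\<forall>s\<in>T. - d s \<ge> 0" by auto
    moreover have "(\<Sum>s\<in>T. - d s) = 0" using sum0 by (simp add: sum_negf)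
    ultimately have "\<forall>s\<in>T. - d s = 0" using sum_nonneg_eq_0_iff[OF fin, of "\<lambda>s. - d s"] by auto
    thus False using s0 by auto
  qed
  have exm: "\<exists>s\<in>T. d s < 0"
  proof (rule ccontr)
    assume "\<not> ?thesis"
    hence "\<forall>s\<in>T. d s \<ge> 0" by auto
    hence "\<forall>s\<in>T. d s = 0" using sum_nonneg_eq_0_iff[OF fin, of d] sum0 by auto
    thus False using s0 by auto
  qed
  define Fp where "Fp = {s \<in> T. dp s > 0}"
  define Fm where "Fm = {s \<in> T. dm s > 0}"
  have clp: "t \<in> Fp" if "s \<in> Fp" "tstep S phi c u s t" for s t
    using that pos_closed[OF fin Pnn dpfx dpnn, of s t]
    unfolding Fp_def tstep_def P_def T_def by auto
  have clm: "t \<in> Fm" if "s \<in> Fm" "tstep S phi c u s t" for s t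
    using that pos_closed[OF fin Pnn dmfx dmnn, of s t]
    unfolding Fm_def tstep_def P_def T_def by auto
  have Fpne: "Fp \<noteq> {}" using exp unfolding Fp_def dp_def by auto
  have Fmne: "Fm \<noteq> {}" using exm unfolding Fm_def dm_def by auto
  obtain K1 where K1: "recurrent_class S phi c u K1" "K1 \<subseteq> Fp" "K1 \<noteq> {}"
    using closed_has_recurrent[of Fp S c phi u] clp Fpne unfolding Fp_def T_def by blast
  obtain K2 where K2: "recurrent_class S phi c u K2" "K2 \<subseteq> Fm" "K2 \<noteq> {}"
    using closed_has_recurrent[of Fm S c phi u] clm Fmne unfolding Fm_def T_def by blast
  have "K1 = K2" using uq K1 K2 by blast
  then obtain s where "s \<in> Fp" "s \<in> Fm" using K1 K2 by blast
  thus False unfolding Fp_def Fm_def dp_def dm_def by auto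
qed

lemma stationary_exists:
  fixes S :: "'c \<Rightarrow> 's::finite set"
  assumes nn: "\<And>s a s'. s \<in> S c \<Longrightarrow> a \<in> A c s \<Longrightarrow> s' \<in> S c \<Longrightarrow> phi c s' s a \<ge> 0"
    and ks: "\<And>s a. s \<in> S c \<Longrightarrow> a \<in> A c s \<Longrightarrow> (\<Sum>s' \<in> S c. phi c s' s a) = 1"
    and u: "u \<in> policies S A c"
    and Sne: "S c \<noteq> {}"
  shows "\<exists>\<eta>. stationary S phi lam c u \<eta>"
proof -
  define T where "T = S c"
  define P where "P t s = phi c t s (u s)" for t s
  have uA: "s \<in> T \<Longrightarrow> u s \<in> A c s" for s using u unfolding policies_def T_def by auto
  have Pnn: "\<And>s t. s \<in> T \<Longrightarrow> t \<in> T \<Longrightarrow> P t s \<ge> 0"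
    unfolding P_def using nn uA T_def by auto
  have Pcs: "\<And>s. s \<in> T \<Longrightarrow> (\<Sum>t\<in>T. P t s) = 1"
    unfolding P_def using ks uA T_def by auto
  define D :: "(real^'s) set" where
    "D = {v. (\<forall>s. s \<notin> T \<longrightarrow> v$s = 0) \<and> (\<forall>s\<in>T. v$s \<ge> 0) \<and> (\<Sum>s\<in>T. v$s) = 1}"
  define f :: "real^'s \<Rightarrow> real^'s" where
    "f v = (\<chi> t. if t \<in> T then (\<Sum>s\<in>T. P t s * v$s) else 0)" for v
  have Dsub: "D \<subseteq> cball 0 (real CARD('s))"
  proof
    fix v assume v: "v \<in> D"
    have b: "\<bar>v$s\<bar> \<le> 1" for s
    proof (cases "s \<in> T")
      case True
      have "v$s \<le> (\<Sum>s\<in>T. v$s)" by (rule member_le_sum) (use v True in \<open>auto simp: D_def\<close>)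
      thus ?thesis using v True by (auto simp: D_def)
    next
      case False thus ?thesis using v by (auto simp: D_def)
    qed
    have "norm v \<le> (\<Sum>i\<in>UNIV. \<bar>v$i\<bar>)" by (rule norm_le_l1_cart)
    also have "\<dots> \<le> (\<Sum>i\<in>(UNIV::'s set). 1)" by (rule sum_mono) (rule b)
    finally show "v \<in> cball 0 (real CARD('s))" by simp
  qed
  have Dcl: "closed D"
  proof -
    have "D = (\<Inter>s\<in>-T. {v. v$s = 0}) \<inter> (\<Inter>s\<in>T. {v. v$s \<ge> 0}) \<inter> {v. (\<Sum>s\<in>T. v$s) = 1}"
      unfolding D_def by auto
    also have "closed \<dots>"
      by (intro closed_Int closed_INT ballI closed_Collect_eq closed_Collect_le continuous_intros)
    finally show ?thesis .
  qed
  have Dcomp: "compact D" using Dcl Dsub bounded_cball bounded_subset compact_eq_bounded_closed by metis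
  have Dconv: "convex D"
    unfolding convex_def D_def by (auto simp: sum.distrib simp flip: sum_distrib_left)
  obtain s0 where s0: "s0 \<in> T" using Sne T_def by auto
  have Dne: "D \<noteq> {}"
  proof -
    have "(\<chi> s. if s = s0 then 1 else 0) \<in> D" unfolding D_def using s0 by auto
    thus ?thesis by auto
  qed
  have fcont: "continuous_on D f" unfolding f_def
    apply (intro continuous_intros)
    subgoal for t by (cases "t \<in> T") (auto intro!: continuous_intros)
    done
  have fD: "f \<in> D \<rightarrow> D"
  proof
    fix v assume v: "v \<in> D"
    have "(\<Sum>t\<in>T. \<Sum>s\<in>T. P t s * v$s) = (\<Sum>s\<in>T. v$s * (\<Sum>t\<in>T. P t s))"
      by (subst sum.swap) (simp add: sum_distrib_left mult.commute)
    also have "\<dots> = 1" using Pcs v by (simp add: D_def)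
    finally have "(\<Sum>t\<in>T. \<Sum>s\<in>T. P t s * v$s) = 1" .
    moreover have "(\<Sum>s\<in>T. P t s * v$s) \<ge> 0" if "t \<in> T" for t
      by (rule sum_nonneg) (use Pnn v that in \<open>auto simp: D_def\<close>)
    ultimately show "f v \<in> D" unfolding f_def D_def by auto
  qed
  obtain v where v: "v \<in> D" "f v = v" using brouwer[OF Dcomp Dconv Dne fcont fD] by blast
  have "stationary S phi lam c u (\<lambda>s. v$s)"
    unfolding stationary_def
  proof (intro conjI ballI allI impI)
    show "\<And>s. s \<notin> S c \<Longrightarrow> v$s = 0" using v unfolding D_def T_def by auto
    show "\<And>s. s \<in> S c \<Longrightarrow> v$s \<ge> 0" using v unfolding D_def T_def by auto
    show "(\<Sum>s\<in>S c. v$s) = 1" using v unfolding D_def T_def by auto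
    fix s assume s: "s \<in> S c"
    have "f v $ s = v $ s" using v by simp
    hence "(\<Sum>s'\<in>S c. phi c s s' (u s') * v$s') = v$s"
      unfolding f_def P_def T_def using s by simp
    thus "lam * ((\<Sum>s'\<in>S c. phi c s s' (u s') * v$s') - v$s) = 0" by simp
  qed
  thus ?thesis by blast
qed



lemma eta_stat:
  fixes S :: "'c \<Rightarrow> 's::finite set"
  assumes nn: "\<And>s a s'. s \<in> S c \<Longrightarrow> a \<in> A c s \<Longrightarrow> s' \<in> S c \<Longrightarrow> phi c s' s a \<ge> 0"
    and ks: "\<And>s a. s \<in> S c \<Longrightarrow> a \<in> A c s \<Longrightarrow> (\<Sum>s' \<in> S c. phi c s' s a) = 1"
    and A2: "A2 S A phi" and lam: "lam > 0"
    and u: "u \<in> policies S A c"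
  shows "stationary S phi lam c u (eta S phi lam c u)"
proof -
  have uq: "\<exists>!K. recurrent_class S phi c u K" using A2 u unfolding A2_def by blast
  then obtain K where "recurrent_class S phi c u K" by blast
  hence Sne: "S c \<noteq> {}" unfolding recurrent_class_def comm_class_def by auto
  obtain \<eta> where e: "stationary S phi lam c u \<eta>" using stationary_exists[where S=S and A=A and phi=phi and c=c and u=u and lam=lam, OF nn ks u Sne] by blast
  have "\<And>\<eta>'. stationary S phi lam c u \<eta>' \<Longrightarrow> \<eta>' = \<eta>"
    using stationary_unique[where S=S and A=A and phi=phi and c=c and u=u and lam=lam, OF nn ks u uq lam] e by blast
  thus ?thesis unfolding eta_def using e by (metis theI)
qed

lemma idx_Sigma: "idx S A = Sigma UNIV (policies S A)"
  unfolding idx_def by auto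

definition coef :: "('c \<Rightarrow> 's set) \<Rightarrow> ('c \<Rightarrow> 's \<Rightarrow> 's \<Rightarrow> 'r set \<Rightarrow> real) \<Rightarrow> real \<Rightarrow> 'r \<Rightarrow> ('c \<times> ('s \<Rightarrow> 'r set)) \<Rightarrow> real" where
  "coef S phi lam r i = (\<Sum>s\<in>{s\<in>S (fst i). r \<in> snd i s}. eta S phi lam (fst i) (snd i) s)"

lemma flow_lin:
  fixes S :: "'c::finite \<Rightarrow> 's::finite set" and A :: "'c \<Rightarrow> 's \<Rightarrow> 'r::finite set set"
  shows "flow S A phi lam r x = lam * (\<Sum>i\<in>idx S A. coef S phi lam r i * x$i)"
proof -
  have "(\<Sum>c\<in>UNIV. \<Sum>s \<in> S c. \<Sum>u \<in> {u \<in> policies S A c. r \<in> u s}. eta S phi lam c u s * x $ (c, u))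
      = (\<Sum>c\<in>UNIV. \<Sum>s \<in> S c. \<Sum>u \<in> policies S A c. if r \<in> u s then eta S phi lam c u s * x $ (c, u) else 0)"
    by (simp add: sum.inter_filter)
  also have "\<dots> = (\<Sum>c\<in>UNIV. \<Sum>u \<in> policies S A c. \<Sum>s \<in> S c. if r \<in> u s then eta S phi lam c u s * x $ (c, u) else 0)"
    by (rule sum.cong[OF refl], rule sum.swap)
  also have "\<dots> = (\<Sum>c\<in>UNIV. \<Sum>u \<in> policies S A c. coef S phi lam r (c,u) * x $ (c, u))"
    unfolding coef_def by (simp add: sum.inter_filter[symmetric] sum_distrib_right)
  also have "\<dots> = (\<Sum>i\<in>idx S A. coef S phi lam r i * x$i)"
    unfolding idx_Sigma by (subst sum.Sigma) auto
  finally show ?thesis unfolding flow_def by simp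
qed

lemma payoff_eq:
  fixes S :: "'c::finite \<Rightarrow> 's::finite set" and A :: "'c \<Rightarrow> 's \<Rightarrow> 'r::finite set set"
  shows "payoff S A phi lam w c u x = (\<Sum>r\<in>UNIV. w r (flow S A phi lam r x) * coef S phi lam r (c,u))"
proof -
  have "payoff S A phi lam w c u x = (\<Sum>s \<in> S c. \<Sum>r\<in>UNIV. if r \<in> u s then eta S phi lam c u s * w r (flow S A phi lam r x) else 0)"
    unfolding payoff_def by (simp add: sum_distrib_left sum.inter_filter[symmetric])
  also have "\<dots> = (\<Sum>r\<in>UNIV. \<Sum>s \<in> S c. if r \<in> u s then eta S phi lam c u s * w r (flow S A phi lam r x) else 0)"
    by (rule sum.swap)
  also have "\<dots> = (\<Sum>r\<in>UNIV. w r (flow S A phi lam r x) * coef S phi lam r (c,u))"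
    unfolding coef_def by (simp add: sum.inter_filter[symmetric] sum_distrib_left mult.commute)
  finally show ?thesis .
qed



lemma vec_nth_deriv: "((\<lambda>x::real^'n. x$i) has_derivative (\<lambda>h. h$i)) F"
  using bounded_linear.has_derivative[OF bounded_linear_vec_nth has_derivative_ident, of i F] by simp

lemma nash_class:
  fixes F x y :: "'u \<Rightarrow> real"
  assumes fin: "finite P" and xnn: "\<And>u. u \<in> P \<Longrightarrow> x u \<ge> 0" and ynn: "\<And>u. u \<in> P \<Longrightarrow> y u \<ge> 0"
    and sx: "(\<Sum>u\<in>P. x u) = M" and sy: "(\<Sum>u\<in>P. y u) = M" and M: "M > 0"
    and N: "\<And>u v. u \<in> P \<Longrightarrow> x u > 0 \<Longrightarrow> v \<in> P \<Longrightarrow> F v \<le> F u"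
  shows "(\<Sum>u\<in>P. F u * y u) \<le> (\<Sum>u\<in>P. F u * x u)"
proof -
  obtain u0 where u0: "u0 \<in> P" "x u0 > 0"
  proof (rule ccontr)
    assume "\<not> thesis"
    hence "\<forall>u\<in>P. x u \<le> 0" using that by force
    hence "(\<Sum>u\<in>P. x u) \<le> 0" by (simp add: sum_nonpos)
    thus False using sx M by simp
  qed
  have "(\<Sum>u\<in>P. F u * y u) \<le> (\<Sum>u\<in>P. F u0 * y u)"
    by (rule sum_mono) (use N u0 ynn in \<open>auto intro: mult_right_mono\<close>)
  also have "\<dots> = F u0 * M" using sy by (simp add: sum_distrib_left[symmetric])
  also have "\<dots> = (\<Sum>u\<in>P. F u0 * x u)" using sx by (simp add: sum_distrib_left[symmetric])
  also have "\<dots> = (\<Sum>u\<in>P. F u * x u)"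
  proof (rule sum.cong[OF refl])
    fix u assume u: "u \<in> P"
    show "F u0 * x u = F u * x u"
    proof (cases "x u > 0")
      case True
      hence "F u0 \<le> F u" "F u \<le> F u0" using N u u0 by auto
      thus ?thesis by simp
    next
      case False
      hence "x u = 0" using xnn u by force
      thus ?thesis by simp
    qed
  qed
  finally show ?thesis .
qed

lemma between_eq:
  fixes f :: "real \<Rightarrow> real"
  assumes mono: "\<And>a b. 0 \<le> a \<Longrightarrow> a \<le> b \<Longrightarrow> f b \<le> f a"
    and p: "p \<ge> 0" and q: "q \<ge> 0" and eq: "f p = f q"
    and a: "a \<ge> 0" and b: "b \<ge> 0" and ab: "a + b = 1"
  shows "f (a * p + b * q) = f p"
proof -
  have lo: "min p q \<le> a * p + b * q"
  proof -
    have "a * min p q \<le> a * p" "b * min p q \<le> b * q" using a b by (auto intro: mult_left_mono)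
    hence "(a + b) * min p q \<le> a * p + b * q" by (simp add: distrib_right)
    thus ?thesis using ab by simp
  qed
  have hi: "a * p + b * q \<le> max p q"
  proof -
    have "a * p \<le> a * max p q" "b * q \<le> b * max p q" using a b by (auto intro: mult_left_mono)
    hence "a * p + b * q \<le> (a + b) * max p q" by (simp add: distrib_right)
    thus ?thesis using ab by simp
  qed
  have "f (max p q) \<le> f (a * p + b * q)" using mono[OF _ hi] lo p q by auto
  moreover have "f (a * p + b * q) \<le> f (min p q)" using mono[OF _ lo] p q by auto
  moreover have "f (max p q) = f p" "f (min p q) = f p" using eq by (auto simp: max_def min_def)
  ultimately show ?thesis by simp
qed



theorem lemma4:
  fixes S :: "'c::finite \<Rightarrow> 's::finite set"
    and A :: "'c \<Rightarrow> 's \<Rightarrow> 'r::finite set set"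
    and phi :: "'c \<Rightarrow> 's \<Rightarrow> 's \<Rightarrow> 'r set \<Rightarrow> real"
    and lam :: real
    and m :: "'c \<Rightarrow> real"
    and w :: "'r \<Rightarrow> real \<Rightarrow> real"
  assumes mass_pos: "\<And>c. m c > 0"
    and actions_nonempty: "\<And>c s. s \<in> S c \<Longrightarrow> A c s \<noteq> {}"
    and kernel_nonneg: "\<And>c s a s'. s \<in> S c \<Longrightarrow> a \<in> A c s \<Longrightarrow> s' \<in> S c \<Longrightarrow> phi c s' s a \<ge> 0"
    and kernel_sum: "\<And>c s a. s \<in> S c \<Longrightarrow> a \<in> A c s \<Longrightarrow> (\<Sum>s' \<in> S c. phi c s' s a) = 1"
    and A2: "A2 S A phi"
    and lam_pos: "lam > 0"
    and w_C1: "\<And>r. C1_nonneg (w r)"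
  shows "(\<exists>(U :: real ^ ('c \<times> ('s \<Rightarrow> 'r set)) \<Rightarrow> real) G.
            (\<forall>x \<in> Rn_nonneg S A.
               (U has_derivative (\<lambda>h. \<Sum>i \<in> idx S A. G x i * h $ i)) (at x within Rn_nonneg S A)) \<and>
            (\<forall>i \<in> idx S A. continuous_on (Rn_nonneg S A) (\<lambda>x. G x i)) \<and>
            (\<forall>x \<in> XUD S A m. \<forall>(c, u) \<in> idx S A. G x (c, u) = payoff S A phi lam w c u x))
       \<and> ((\<forall>r a b. 0 \<le> a \<longrightarrow> a \<le> b \<longrightarrow> w r b \<le> w r a) \<longrightarrow>
            compact (nash_set S A phi lam w m) \<and> convex (nash_set S A phi lam w m))
       \<and> ((\<forall>r a b. 0 \<le> a \<longrightarrow> a < b \<longrightarrow> w r b < w r a) \<longrightarrow>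
            (\<forall>x \<in> nash_set S A phi lam w m. \<forall>y \<in> nash_set S A phi lam w m.
               \<forall>r. flow S A phi lam r x = flow S A phi lam r y))"
proof -
  let ?R = "Rn_nonneg S A"
  let ?fl = "flow S A phi lam"
  let ?cf = "coef S phi lam"
  have etann: "eta S phi lam c u s \<ge> 0" if "u \<in> policies S A c" for c u s
    using eta_stat[where S=S and A=A and phi=phi and c=c and u=u and lam=lam,
        OF kernel_nonneg kernel_sum A2 lam_pos that]
    unfolding stationary_def by (cases "s \<in> S c") auto
  have coefnn: "?cf r i \<ge> 0" if "i \<in> idx S A" for r i
    unfolding coef_def using that etann by (auto simp: idx_def intro!: sum_nonneg)
  have flownn: "?fl r x \<ge> 0" if "x \<in> ?R" for r x
    unfolding flow_lin using that coefnn lam_pos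
    by (auto simp: Rn_nonneg_def intro!: sum_nonneg mult_nonneg_nonneg)
  have XR: "XUD S A m \<subseteq> ?R" unfolding XUD_def Rn_nonneg_def by auto
  have wcont: "continuous_on {0..} (w r)" for r
  proof -
    obtain w' where "\<forall>t \<ge> 0. (w r has_real_derivative w' t) (at t within {0..})"
      using w_C1[of r] unfolding C1_nonneg_def by blast
    thus ?thesis unfolding continuous_on_eq_continuous_within
      using DERIV_continuous by fastforce
  qed
  have flcont: "continuous_on X (?fl r)" for r X
    unfolding flow_lin by (intro continuous_intros)
  have flderiv: "(?fl r has_derivative ?fl r) (at x within X)" for r x X
  proof -
    have "((\<lambda>x. lam * (\<Sum>i\<in>idx S A. ?cf r i * x$i)) has_derivative
           (\<lambda>x. lam * (\<Sum>i\<in>idx S A. ?cf r i * x$i))) (at x within X)"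
      by (intro derivative_intros vec_nth_deriv)
    thus ?thesis unfolding flow_lin .
  qed
  have flcomb: "?fl r (a *\<^sub>R x + b *\<^sub>R y) = a * ?fl r x + b * ?fl r y" for r a b x y
    unfolding flow_lin by (simp add: algebra_simps sum.distrib sum_distrib_left)
  have part1: "\<exists>(U :: real ^ ('c \<times> ('s \<Rightarrow> 'r set)) \<Rightarrow> real) G.
            (\<forall>x \<in> Rn_nonneg S A.
               (U has_derivative (\<lambda>h. \<Sum>i \<in> idx S A. G x i * h $ i)) (at x within Rn_nonneg S A)) \<and>
            (\<forall>i \<in> idx S A. continuous_on (Rn_nonneg S A) (\<lambda>x. G x i)) \<and>
            (\<forall>x \<in> XUD S A m. \<forall>(c, u) \<in> idx S A. G x (c, u) = payoff S A phi lam w c u x)"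
  proof -
    define W where "W r t = integral {0..t} (w r)" for r t
    have Wd: "(W r has_real_derivative w r t) (at t within {0..})" if t: "t \<ge> 0" for r t
    proof -
      have c1: "continuous_on {0..t+1} (w r)" using wcont by (rule continuous_on_subset) auto
      have "(W r has_real_derivative w r t) (at t within {0..t+1})"
        unfolding W_def[abs_def] by (rule integral_has_real_derivative[OF c1]) (use t in auto)
      moreover have "at t within {0..t+1} = at t within {0..}"
        by (rule at_within_nhd[where S="{t - 1 <..< t + 1}"]) auto
      ultimately show ?thesis by simp
    qed
    define U where "U x = (1 / lam) * (\<Sum>r\<in>UNIV. W r (?fl r x))" for x
    define G where "G x i = (\<Sum>r\<in>UNIV. w r (?fl r x) * ?cf r i)" for x i
    have "(U has_derivative (\<lambda>h. \<Sum>i \<in> idx S A. G x i * h $ i)) (at x within ?R)" if x: "x \<in> ?R" for x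
    proof -
      have cr: "((\<lambda>x. W r (?fl r x)) has_derivative (\<lambda>h. w r (?fl r x) * ?fl r h)) (at x within ?R)" for r
      proof -
        have "((\<lambda>x. W r (?fl r x)) has_derivative (\<lambda>h. (\<lambda>y. (*) (w r y)) (?fl r x) (?fl r h))) (at x within ?R)"
          by (rule has_derivative_in_compose2[where t="{0..}"])
             (use Wd flownn x flderiv in \<open>auto simp: has_field_derivative_def\<close>)
        thus ?thesis by simp
      qed
      have "(U has_derivative (\<lambda>h. (1 / lam) * (\<Sum>r\<in>UNIV. w r (?fl r x) * ?fl r h))) (at x within ?R)"
        unfolding U_def[abs_def] by (intro derivative_intros cr)
      moreover have "(\<lambda>h. (1 / lam) * (\<Sum>r\<in>UNIV. w r (?fl r x) * ?fl r h)) = (\<lambda>h. \<Sum>i \<in> idx S A. G x i * h $ i)"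
      proof
        fix h
        have "(1 / lam) * (\<Sum>r\<in>UNIV. w r (?fl r x) * ?fl r h)
            = (\<Sum>r\<in>UNIV. \<Sum>i \<in> idx S A. w r (?fl r x) * ?cf r i * h $ i)"
          unfolding flow_lin[of S A phi lam _ h] using lam_pos
          by (simp add: sum_distrib_left mult.assoc)
        also have "\<dots> = (\<Sum>i \<in> idx S A. \<Sum>r\<in>UNIV. w r (?fl r x) * ?cf r i * h $ i)"
          by (rule sum.swap)
        also have "\<dots> = (\<Sum>i \<in> idx S A. G x i * h $ i)"
          unfolding G_def by (simp add: sum_distrib_right)
        finally show "(1 / lam) * (\<Sum>r\<in>UNIV. w r (?fl r x) * ?fl r h) = (\<Sum>i \<in> idx S A. G x i * h $ i)" .
      qed
      ultimately show ?thesis by simp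
    qed
    moreover have "continuous_on ?R (\<lambda>x. G x i)" for i
    proof -
      have "continuous_on ?R (\<lambda>x. w r (?fl r x))" for r
        by (rule continuous_on_compose2[OF wcont flcont]) (use flownn in auto)
      thus ?thesis unfolding G_def by (intro continuous_intros)
    qed
    moreover have "G x (c, u) = payoff S A phi lam w c u x" for x c u
      unfolding G_def payoff_eq ..
    ultimately show ?thesis by blast
  qed
  have inner: "(\<Sum>r\<in>UNIV. w r (?fl r x) * ?fl r z)
      = lam * (\<Sum>c\<in>UNIV. \<Sum>u\<in>policies S A c. payoff S A phi lam w c u x * z$(c,u))" for x z
  proof -
    have "(\<Sum>r\<in>UNIV. w r (?fl r x) * ?fl r z)
        = lam * (\<Sum>r\<in>UNIV. \<Sum>i \<in> idx S A. w r (?fl r x) * ?cf r i * z $ i)"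
      unfolding flow_lin[of S A phi lam _ z]
      by (simp add: sum_distrib_left mult.assoc mult.left_commute)
    also have "\<dots> = lam * (\<Sum>i \<in> idx S A. \<Sum>r\<in>UNIV. w r (?fl r x) * ?cf r i * z $ i)"
      by (subst sum.swap) (rule refl)
    also have "\<dots> = lam * (\<Sum>i \<in> idx S A. payoff S A phi lam w (fst i) (snd i) x * z $ i)"
      unfolding payoff_eq by (simp add: sum_distrib_right)
    also have "\<dots> = lam * (\<Sum>c\<in>UNIV. \<Sum>u\<in>policies S A c. payoff S A phi lam w c u x * z$(c,u))"
      unfolding idx_Sigma by (subst sum.Sigma) (auto simp: split_beta)
    finally show ?thesis .
  qed
  have nashineq: "(\<Sum>r\<in>UNIV. w r (?fl r x) * ?fl r y) \<le> (\<Sum>r\<in>UNIV. w r (?fl r x) * ?fl r x)"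
    if x: "x \<in> nash_set S A phi lam w m" and y: "y \<in> XUD S A m" for x y
  proof -
    have xX: "x \<in> XUD S A m" using x unfolding nash_set_def by auto
    have "(\<Sum>u\<in>policies S A c. payoff S A phi lam w c u x * y$(c,u))
        \<le> (\<Sum>u\<in>policies S A c. payoff S A phi lam w c u x * x$(c,u))" for c
      by (rule nash_class[where M="m c"])
         (use x y xX mass_pos in \<open>auto simp: XUD_def nash_set_def idx_def\<close>)
    hence "(\<Sum>c\<in>UNIV. \<Sum>u\<in>policies S A c. payoff S A phi lam w c u x * y$(c,u))
        \<le> (\<Sum>c\<in>UNIV. \<Sum>u\<in>policies S A c. payoff S A phi lam w c u x * x$(c,u))"
      by (rule sum_mono)
    thus ?thesis unfolding inner using lam_pos by simp
  qed
  have key: "(w r (?fl r x) - w r (?fl r y)) * (?fl r y - ?fl r x) = 0"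
    if mono: "\<forall>r a b. 0 \<le> a \<longrightarrow> a \<le> b \<longrightarrow> w r b \<le> w r a"
      and x: "x \<in> nash_set S A phi lam w m" and y: "y \<in> nash_set S A phi lam w m" for x y r
  proof -
    have xX: "x \<in> XUD S A m" and yX: "y \<in> XUD S A m" using x y unfolding nash_set_def by auto
    define t where "t r = (w r (?fl r x) - w r (?fl r y)) * (?fl r y - ?fl r x)" for r
    have tnn: "t r \<ge> 0" for r
    proof -
      have p: "?fl r x \<ge> 0" "?fl r y \<ge> 0" using flownn XR xX yX by auto
      show ?thesis
      proof (cases "?fl r x \<le> ?fl r y")
        case True
        hence "w r (?fl r y) \<le> w r (?fl r x)" using mono p by auto
        thus ?thesis unfolding t_def using True by simp
      next
        case False
        hence "w r (?fl r x) \<le> w r (?fl r y)" using mono p by auto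
        thus ?thesis unfolding t_def using False by (simp add: mult_nonpos_nonpos)
      qed
    qed
    have "(\<Sum>r\<in>UNIV. t r) = (\<Sum>r\<in>UNIV. w r (?fl r x) * ?fl r y) - (\<Sum>r\<in>UNIV. w r (?fl r x) * ?fl r x)
        + ((\<Sum>r\<in>UNIV. w r (?fl r y) * ?fl r x) - (\<Sum>r\<in>UNIV. w r (?fl r y) * ?fl r y))"
      unfolding t_def by (simp add: algebra_simps sum.distrib sum_subtractf)
    also have "\<dots> \<le> 0" using nashineq[OF x yX] nashineq[OF y xX] by simp
    finally have "(\<Sum>r\<in>UNIV. t r) = 0" using tnn by (simp add: antisym sum_nonneg)
    hence "\<forall>r\<in>UNIV. t r = 0" using sum_nonneg_eq_0_iff[of UNIV t] tnn by simp
    thus ?thesis unfolding t_def by simp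
  qed
  have part3: "(\<forall>r a b. 0 \<le> a \<longrightarrow> a < b \<longrightarrow> w r b < w r a) \<longrightarrow>
            (\<forall>x \<in> nash_set S A phi lam w m. \<forall>y \<in> nash_set S A phi lam w m.
               \<forall>r. flow S A phi lam r x = flow S A phi lam r y)"
  proof (intro impI ballI allI)
    fix x y r
    assume strict: "\<forall>r a b. 0 \<le> a \<longrightarrow> a < b \<longrightarrow> w r b < w r a"
      and x: "x \<in> nash_set S A phi lam w m" and y: "y \<in> nash_set S A phi lam w m"
    have mono: "\<forall>r a b. 0 \<le> a \<longrightarrow> a \<le> b \<longrightarrow> w r b \<le> w r a"
      using strict by (metis order_le_less order_less_imp_le)
    have xX: "x \<in> XUD S A m" and yX: "y \<in> XUD S A m" using x y unfolding nash_set_def by auto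
    have p: "?fl r x \<ge> 0" "?fl r y \<ge> 0" using flownn XR xX yX by auto
    have k: "(w r (?fl r x) - w r (?fl r y)) * (?fl r y - ?fl r x) = 0" using key[OF mono x y] .
    show "?fl r x = ?fl r y"
    proof (rule ccontr)
      assume ne: "?fl r x \<noteq> ?fl r y"
      hence "w r (?fl r x) = w r (?fl r y)" using k by simp
      moreover have "w r (?fl r x) \<noteq> w r (?fl r y)"
      proof (cases "?fl r x < ?fl r y")
        case True
        thus ?thesis using strict p by (metis less_irrefl)
      next
        case False
        hence "?fl r y < ?fl r x" using ne by simp
        thus ?thesis using strict p by (metis less_irrefl)
      qed
      ultimately show False by simp
    qed
  qed
  have conv: "convex (nash_set S A phi lam w m)"
    if mono: "\<forall>r a b. 0 \<le> a \<longrightarrow> a \<le> b \<longrightarrow> w r b \<le> w r a"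
    unfolding convex_def
  proof (intro ballI allI impI)
    fix x y and a b :: real
    assume x: "x \<in> nash_set S A phi lam w m" and y: "y \<in> nash_set S A phi lam w m"
      and a: "0 \<le> a" and b: "0 \<le> b" and ab: "a + b = 1"
    define z where "z = a *\<^sub>R x + b *\<^sub>R y"
    have xX: "x \<in> XUD S A m" and yX: "y \<in> XUD S A m" using x y unfolding nash_set_def by auto
    have wz: "w r (?fl r z) = w r (?fl r x) \<and> w r (?fl r y) = w r (?fl r x)" for r
    proof -
      have p: "?fl r x \<ge> 0" "?fl r y \<ge> 0" using flownn XR xX yX by auto
      have k: "(w r (?fl r x) - w r (?fl r y)) * (?fl r y - ?fl r x) = 0" using key[OF mono x y] .
      have fz: "?fl r z = a * ?fl r x + b * ?fl r y" unfolding z_def flcomb ..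
      show ?thesis
      proof (cases "?fl r x = ?fl r y")
        case True
        hence "?fl r z = ?fl r x" using fz ab by (simp add: distrib_right[symmetric])
        thus ?thesis using True by simp
      next
        case False
        hence eq: "w r (?fl r x) = w r (?fl r y)" using k by simp
        have "w r (a * ?fl r x + b * ?fl r y) = w r (?fl r x)"
          by (rule between_eq[OF _ p eq a b ab]) (use mono in auto)
        thus ?thesis using fz eq by simp
      qed
    qed
    have payz: "payoff S A phi lam w c u z = payoff S A phi lam w c u x"
      "payoff S A phi lam w c u y = payoff S A phi lam w c u x" for c u
      unfolding payoff_def using wz by simp_all
    have zX: "z \<in> XUD S A m"
      using xX yX a b ab unfolding XUD_def z_def
      by (auto simp: sum.distrib simp flip: sum_distrib_left distrib_right)
    show "a *\<^sub>R x + b *\<^sub>R y \<in> nash_set S A phi lam w m"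
      unfolding z_def[symmetric] nash_set_def
    proof (intro CollectI conjI zX allI ballI impI)
      fix c u v
      assume u: "u \<in> policies S A c" and v: "v \<in> policies S A c" and zp: "0 < z $ (c, u)"
      have "0 \<le> x $ (c,u)" "0 \<le> y $ (c,u)" using xX yX u by (auto simp: XUD_def idx_def)
      hence "0 < x $ (c,u) \<or> 0 < y $ (c,u)" using zp a b unfolding z_def
        by (auto simp: order_le_less)
      thus "payoff S A phi lam w c v z \<le> payoff S A phi lam w c u z"
        using x y u v unfolding payz nash_set_def by (auto simp: payz)
    qed
  qed
  have comp: "compact (nash_set S A phi lam w m)"
  proof -
    define wt where "wt r t = w r (max 0 t)" for r t
    have wtc: "continuous_on UNIV (wt r)" for r
      unfolding wt_def[abs_def]
      by (rule continuous_on_compose2[OF wcont[of r]]) (auto intro!: continuous_intros)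
    define Pt where "Pt c u x = payoff S A phi lam wt c u x" for c u x
    have Ptc: "continuous_on UNIV (Pt c u)" for c u
    proof -
      have "continuous_on UNIV (\<lambda>x. wt r (?fl r x))" for r
        by (rule continuous_on_compose2[OF wtc flcont]) auto
      thus ?thesis unfolding Pt_def[abs_def] payoff_def by (intro continuous_intros)
    qed
    have PtX: "Pt c u x = payoff S A phi lam w c u x" if "x \<in> XUD S A m" for c u x
      unfolding Pt_def payoff_def wt_def using flownn XR that by auto
    have XUDeq: "XUD S A m = (\<Inter>i\<in>-idx S A. {x. x$i = 0}) \<inter> (\<Inter>i\<in>idx S A. {x. x$i \<ge> 0})
        \<inter> (\<Inter>c. {x. (\<Sum>u \<in> policies S A c. x $ (c, u)) = m c})"
      unfolding XUD_def by auto
    have XUDcl: "closed (XUD S A m)" unfolding XUDeq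
      by (intro closed_Int closed_INT ballI closed_Collect_eq closed_Collect_le continuous_intros)
    have "nash_set S A phi lam w m = XUD S A m \<inter>
       (\<Inter>c. \<Inter>u\<in>policies S A c. \<Inter>v\<in>policies S A c. {x. x$(c,u) \<le> 0} \<union> {x. Pt c v x \<le> Pt c u x})"
      unfolding nash_set_def using PtX by (auto simp: not_less) (meson linorder_not_le)
    moreover have "closed \<dots>"
      by (intro closed_Int closed_INT ballI closed_Un XUDcl closed_Collect_le continuous_intros
          continuous_on_subset[OF Ptc]) auto
    ultimately have cl: "closed (nash_set S A phi lam w m)" by simp
    define B where "B = (\<Sum>c\<in>UNIV. m c)"
    have bnd: "nash_set S A phi lam w m \<subseteq> cball 0 (real CARD('c \<times> ('s \<Rightarrow> 'r set)) * B)"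
    proof
      fix x assume "x \<in> nash_set S A phi lam w m"
      hence x: "x \<in> XUD S A m" unfolding nash_set_def by auto
      have bi: "\<bar>x$i\<bar> \<le> B" for i
      proof (cases "i \<in> idx S A")
        case True
        then obtain c u where i: "i = (c,u)" "u \<in> policies S A c" by (auto simp: idx_def)
        have "x$(c,u) \<le> (\<Sum>u \<in> policies S A c. x $ (c, u))"
          by (rule member_le_sum) (use x i in \<open>auto simp: XUD_def idx_def\<close>)
        also have "\<dots> = m c" using x by (auto simp: XUD_def)
        also have "\<dots> \<le> B" unfolding B_def
          by (rule member_le_sum) (use mass_pos in \<open>auto intro: less_imp_le\<close>)
        finally show ?thesis using x i True by (auto simp: XUD_def)
      next
        case False
        hence "x$i = 0" using x unfolding XUD_def by blast
        moreover have "B \<ge> 0" unfolding B_def using mass_pos by (auto intro: sum_nonneg less_imp_le)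
        ultimately show ?thesis by simp
      qed
      have "norm x \<le> (\<Sum>i\<in>UNIV. \<bar>x$i\<bar>)" by (rule norm_le_l1_cart)
      also have "\<dots> \<le> (\<Sum>i\<in>(UNIV::('c \<times> ('s \<Rightarrow> 'r set)) set). B)" by (rule sum_mono) (rule bi)
      finally show "x \<in> cball 0 (real CARD('c \<times> ('s \<Rightarrow> 'r set)) * B)" by simp
    qed
    show ?thesis using cl bnd bounded_cball bounded_subset compact_eq_bounded_closed by metis
  qed
  show ?thesis using part1 part3 comp conv by blast
qed

end
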